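(* Let $k,d\geq 4$. Let $G$ be a finite $C_4$-free bipartite graph with vertex classes $A$ and $B$. Let $A=A_1\cup\dots\cup A_r$ and $B=B_1\cup\dots\cup B_s$ be partitions with $|A_i|\leq d^2$ and $|B_j|\leq d^2$ for all $i\in[r]$, $j\in[s]$. Define the graph $H$ on vertex set $\{a_1,\dots,a_r,b_1,\dots,b_s\}$ in which $a_ib_j$ is an edge exactly if $G$ has at least one edge between $A_i$ and $B_j$ (and there are no other edges). Suppose $H$ is $k$-degenerate. Then $d(G)\leq 13kd$.
   Context: $d(G)=2e(G)/|V(G)|$ is the average degree. A graph is $C_4$-free if it contains no $4$-cycle as a subgraph. A graph is $k$-degenerate if every subgraph of it has a vertex of degree at most $k$. *)

theory Defs
  imports Complex_Main "HOL-Library.Disjoint_Sets"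
begin

definition simple_graph :: "'a set \<Rightarrow> 'a set set \<Rightarrow> bool" where
  "simple_graph V E \<longleftrightarrow> finite V \<and> (\<forall>e\<in>E. e \<subseteq> V \<and> card e = 2)"

definition avg_degree :: "'a set \<Rightarrow> 'a set set \<Rightarrow> real" where
  "avg_degree V E = 2 * real (card E) / real (card V)"

definition degree :: "'a set set \<Rightarrow> 'a \<Rightarrow> nat" where
  "degree E v = card {e \<in> E. v \<in> e}"

definition C4_free :: "'a set set \<Rightarrow> bool" where
  "C4_free E \<longleftrightarrow> \<not> (\<exists>v1 v2 v3 v4. distinct [v1, v2, v3, v4] \<and>
      {v1, v2} \<in> E \<and> {v2, v3} \<in> E \<and> {v3, v4} \<in> E \<and> {v4, v1} \<in> E)"

definition bipartite_classes :: "'a set \<Rightarrow> 'a set set \<Rightarrow> 'a set \<Rightarrow> 'a set \<Rightarrow> bool" where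
  "bipartite_classes V E A B \<longleftrightarrow> A \<union> B = V \<and> A \<inter> B = {} \<and>
     (\<forall>e\<in>E. \<exists>a\<in>A. \<exists>b\<in>B. e = {a, b})"

definition degenerate :: "nat \<Rightarrow> 'a set \<Rightarrow> 'a set set \<Rightarrow> bool" where
  "degenerate k V E \<longleftrightarrow> (\<forall>V' E'. V' \<subseteq> V \<and> V' \<noteq> {} \<and> E' \<subseteq> E \<and> (\<forall>e\<in>E'. e \<subseteq> V')
       \<longrightarrow> (\<exists>v\<in>V'. degree E' v \<le> k))"

definition H_vertices :: "'a set set \<Rightarrow> 'a set set \<Rightarrow> ('a set + 'a set) set" where
  "H_vertices PA PB = Inl ` PA \<union> Inr ` PB"

definition H_edges :: "'a set set \<Rightarrow> 'a set set \<Rightarrow> 'a set set \<Rightarrow> ('a set + 'a set) set set" where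
  "H_edges E PA PB = {{Inl X, Inr Y} | X Y. X \<in> PA \<and> Y \<in> PB \<and> (\<exists>a\<in>X. \<exists>b\<in>Y. {a, b} \<in> E)}"

end

theory Submission
  imports Defs
begin

lemma two_choose2: "2 * ((n::nat) choose 2) = n * (n - 1)"
proof -
  have "even (n * (n - 1))" by (cases n) auto
  thus ?thesis by (simp add: choose_two)
qed

lemma heavy_bound:
  fixes E :: "'a set set" and Q X :: "'a set" and d :: nat
  assumes c4: "C4_free E" and fQ: "finite Q" and fX: "finite X"
    and c2: "\<forall>e\<in>E. card e = 2"
    and hv: "\<forall>x\<in>X. d < card ({y. {x,y}\<in>E} \<inter> Q)"
  shows "d * (\<Sum>x\<in>X. card ({y. {x,y}\<in>E} \<inter> Q)) \<le> card Q * (card Q - 1)"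
proof -
  define N where "N x = {y. {x,y}\<in>E} \<inter> Q" for x
  define F where "F x = {p. p \<subseteq> N x \<and> card p = 2}" for x
  have fN: "finite (N x)" for x using fQ by (simp add: N_def)
  have cF: "card (F x) = card (N x) choose 2" for x
    unfolding F_def using n_subsets[OF fN] by simp
  have disj: "F x \<inter> F x' = {}" if "x \<in> X" "x' \<in> X" "x \<noteq> x'" for x x'
  proof (rule ccontr)
    assume "F x \<inter> F x' \<noteq> {}"
    then obtain p where p: "p \<subseteq> N x" "p \<subseteq> N x'" "card p = 2" unfolding F_def by auto
    then obtain y1 y2 where y: "p = {y1,y2}" "y1 \<noteq> y2" by (meson card_2_iff)
    have e: "{x,y1}\<in>E" "{x,y2}\<in>E" "{x',y1}\<in>E" "{x',y2}\<in>E" using p y unfolding N_def by auto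
    have ne: "x \<noteq> y1" "x \<noteq> y2" "x' \<noteq> y1" "x' \<noteq> y2"
    proof -
      have loop: "{z} \<notin> E" for z using c2 by fastforce
      show "x \<noteq> y1" "x \<noteq> y2" "x' \<noteq> y1" "x' \<noteq> y2" using e loop by auto
    qed
    have "distinct [x, y1, x', y2]" using ne y that by auto
    moreover have "{y1,x'} \<in> E" "{y2,x} \<in> E" using e by (auto simp: insert_commute)
    ultimately show False using c4 e unfolding C4_free_def by blast
  qed
  have fF: "finite (F x)" for x unfolding F_def using fN by auto
  have "(\<Sum>x\<in>X. card (F x)) = card (\<Union>(F ` X))"
    using card_UN_disjoint[OF fX] fF disj by metis
  also have "\<dots> \<le> card {p. p \<subseteq> Q \<and> card p = 2}"
    by (rule card_mono) (auto simp: fQ F_def N_def)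
  also have "\<dots> = card Q choose 2" using n_subsets[OF fQ] by simp
  finally have s: "(\<Sum>x\<in>X. card (N x) choose 2) \<le> card Q choose 2" using cF by simp
  have "d * (\<Sum>x\<in>X. card (N x)) = (\<Sum>x\<in>X. d * card (N x))" by (simp add: sum_distrib_left)
  also have "\<dots> \<le> (\<Sum>x\<in>X. 2 * (card (N x) choose 2))"
  proof (rule sum_mono)
    fix x assume "x \<in> X"
    hence h: "d < card (N x)" using hv N_def by auto
    have "2 * (card (N x) choose 2) = card (N x) * (card (N x) - 1)"
      by (rule two_choose2)
    also have "\<dots> \<ge> card (N x) * d" using h by (intro mult_le_mono2) simp
    finally show "d * card (N x) \<le> 2 * (card (N x) choose 2)" by (simp add: mult.commute)
  qed
  also have "\<dots> = 2 * (\<Sum>x\<in>X. card (N x) choose 2)" by (simp add: sum_distrib_left)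
  also have "\<dots> \<le> 2 * (card Q choose 2)" using s by simp
  also have "\<dots> = card Q * (card Q - 1)" by (rule two_choose2)
  finally show ?thesis unfolding N_def .
qed


theorem lemma17:
  fixes k d :: nat and V A B :: "'a set" and E :: "'a set set" and PA PB :: "'a set set"
  assumes "k \<ge> 4" and "d \<ge> 4"
    and "simple_graph V E"
    and "C4_free E"
    and "bipartite_classes V E A B"
    and "partition_on A PA" and "partition_on B PB"
    and "\<forall>X\<in>PA. card X \<le> d^2" and "\<forall>Y\<in>PB. card Y \<le> d^2"
    and "degenerate k (H_vertices PA PB) (H_edges E PA PB)"
  shows "avg_degree V E \<le> 13 * real k * real d"
proof -
  note sg = assms(3)[unfolded simple_graph_def]
  note bc = assms(5)[unfolded bipartite_classes_def]
  have fV: "finite V" using sg by simp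
  have eV: "\<And>e. e \<in> E \<Longrightarrow> e \<subseteq> V" and c2: "\<forall>e\<in>E. card e = 2" using sg by auto
  have VAB: "V = A \<union> B" and AB: "A \<inter> B = {}" using bc by auto
  have eAB: "\<And>e. e \<in> E \<Longrightarrow> \<exists>a\<in>A. \<exists>b\<in>B. e = {a,b}" using bc by auto
  have fA: "finite A" and fB: "finite B" using fV VAB by auto
  have UA: "\<Union>PA = A" and UB: "\<Union>PB = B" using assms(6,7) partition_onD1 by metis+
  have dA: "disjoint PA" and dB: "disjoint PB" using assms(6,7) partition_onD2 by auto
  have fPA: "finite PA" using finite_elements[OF fA assms(6)] .
  have fPB: "finite PB" using finite_elements[OF fB assms(7)] .
  define P where "P = PA \<union> PB"
  have fP: "finite P" using fPA fPB P_def by simp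
  have UP: "\<Union>P = V" using UA UB VAB P_def by auto
  have fR: "\<And>R. R \<in> P \<Longrightarrow> finite R" using UP fV by (meson Union_upper finite_subset)
  have dP: "disjoint P"
    unfolding P_def disjoint_def
  proof (intro ballI impI)
    fix X Y assume XY: "X \<in> PA \<union> PB" "Y \<in> PA \<union> PB" "X \<noteq> Y"
    show "X \<inter> Y = {}"
      using XY dA dB AB UA UB unfolding disjoint_def by blast
  qed
  have cardR: "\<And>R. R \<in> P \<Longrightarrow> card R \<le> d^2" using assms(8,9) P_def by auto
  have sumP: "(\<Sum>R\<in>P. card R) = card V"
    using card_Union_disjoint[OF dP] fR UP by metis
  have inPA: "\<And>x R. x \<in> R \<Longrightarrow> R \<in> P \<Longrightarrow> x \<in> A \<Longrightarrow> R \<in> PA"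
    using AB UB P_def by blast
  have inPB: "\<And>x R. x \<in> R \<Longrightarrow> R \<in> P \<Longrightarrow> x \<in> B \<Longrightarrow> R \<in> PB"
    using AB UA P_def by blast
  have dpos: "d > 0" using assms(2) by simp

  define N where "N x = {y. {x,y}\<in>E}" for x
  have NV: "N x \<subseteq> V" for x using eV unfolding N_def by blast
  have fN: "finite (N x)" for x using NV fV finite_subset by metis
  define HE where "HE Q = {e\<in>E. \<exists>x y. e={x,y} \<and> y\<in>Q \<and> d < card (N x \<inter> Q)}" for Q
  define L where "L = E - \<Union>(HE ` P)"

  have heavy: "card (HE Q) \<le> d * card Q" if Q: "Q \<in> P" for Q
  proof -
    define X where "X = {x\<in>V. d < card (N x \<inter> Q)}"
    have fX: "finite X" using fV X_def by simp
    have "HE Q \<subseteq> (\<Union>x\<in>X. (\<lambda>y. {x,y}) ` (N x \<inter> Q))"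
    proof
      fix e assume "e \<in> HE Q"
      then obtain x y where "e \<in> E" "e = {x,y}" "y \<in> Q" "d < card (N x \<inter> Q)"
        unfolding HE_def by blast
      moreover have "x \<in> V" using eV calculation by blast
      ultimately show "e \<in> (\<Union>x\<in>X. (\<lambda>y. {x,y}) ` (N x \<inter> Q))"
        unfolding X_def N_def by blast
    qed
    hence "card (HE Q) \<le> card (\<Union>x\<in>X. (\<lambda>y. {x,y}) ` (N x \<inter> Q))"
      using fX fN by (intro card_mono) auto
    also have "\<dots> \<le> (\<Sum>x\<in>X. card ((\<lambda>y. {x,y}) ` (N x \<inter> Q)))" by (rule card_UN_le[OF fX])
    also have "\<dots> \<le> (\<Sum>x\<in>X. card (N x \<inter> Q))" by (intro sum_mono card_image_le) (simp add: fN)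
    finally have c1: "card (HE Q) \<le> (\<Sum>x\<in>X. card (N x \<inter> Q))" .
    have "d * (\<Sum>x\<in>X. card (N x \<inter> Q)) \<le> card Q * (card Q - 1)"
      using heavy_bound[OF assms(4) fR[OF Q] fX c2] X_def N_def by simp
    also have "\<dots> \<le> card Q * d^2" using cardR[OF Q] by (intro mult_le_mono2) simp
    finally have "d * (\<Sum>x\<in>X. card (N x \<inter> Q)) \<le> d * (d * card Q)"
      by (simp add: power2_eq_square mult.commute mult.left_commute)
    hence "(\<Sum>x\<in>X. card (N x \<inter> Q)) \<le> d * card Q" using dpos by simp
    with c1 show ?thesis by simp
  qed

  have lightQ: "card {e\<in>L. \<exists>x\<in>R. \<exists>y\<in>Q. e={x,y}} \<le> d * card R"
    if R: "R \<in> P" and Q: "Q \<in> P" for R Q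
  proof -
    define M where "M x = {y\<in>N x \<inter> Q. {x,y}\<in>L}" for x
    have "{e\<in>L. \<exists>x\<in>R. \<exists>y\<in>Q. e={x,y}} \<subseteq> (\<Union>x\<in>R. (\<lambda>y. {x,y}) ` M x)"
      unfolding M_def N_def L_def by blast
    hence "card {e\<in>L. \<exists>x\<in>R. \<exists>y\<in>Q. e={x,y}} \<le> card (\<Union>x\<in>R. (\<lambda>y. {x,y}) ` M x)"
      using fR[OF R] fN by (intro card_mono) (auto simp: M_def)
    also have "\<dots> \<le> (\<Sum>x\<in>R. card ((\<lambda>y. {x,y}) ` M x))" by (rule card_UN_le[OF fR[OF R]])
    also have "\<dots> \<le> (\<Sum>x\<in>R. d)"
    proof (rule sum_mono)
      fix x assume "x \<in> R"
      show "card ((\<lambda>y. {x,y}) ` M x) \<le> d"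
      proof (cases "M x = {}")
        case True thus ?thesis by simp
      next
        case False
        then obtain y0 where y0: "y0 \<in> N x" "y0 \<in> Q" "{x,y0} \<in> L" unfolding M_def by blast
        have "\<not> d < card (N x \<inter> Q)"
        proof
          assume "d < card (N x \<inter> Q)"
          hence "{x,y0} \<in> HE Q" using y0 unfolding HE_def N_def by blast
          thus False using y0 Q unfolding L_def by blast
        qed
        moreover have "card (M x) \<le> card (N x \<inter> Q)" using fN by (intro card_mono) (auto simp: M_def)
        ultimately show ?thesis using card_image_le[of "M x" "\<lambda>y. {x,y}"] fN
          by (metis (no_types, lifting) M_def finite_Int finite_subset le_trans mem_Collect_eq not_less subsetI)
      qed
    qed
    finally show ?thesis by (simp add: mult.commute)
  qed

  define tag where "tag R = (if R \<in> PA then Inl R else Inr R)" for R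
  have tag_inj: "\<And>R Q. tag R = tag Q \<Longrightarrow> R = Q" unfolding tag_def by (auto split: if_splits)
  have tagH: "\<And>R. R \<in> P \<Longrightarrow> tag R \<in> H_vertices PA PB"
    unfolding tag_def H_vertices_def P_def by auto
  have Hedge: "{tag R, tag Q} \<in> H_edges E PA PB"
    if e: "{x,y} \<in> E" and xy: "x \<in> R" "y \<in> Q" and RQ: "R \<in> P" "Q \<in> P" for x y R Q
  proof -
    obtain a b where ab: "a \<in> A" "b \<in> B" "{x,y} = {a,b}" using eAB[OF e] by blast
    show ?thesis
    proof (cases "x = a")
      case True
      hence "y = b" using ab by (metis doubleton_eq_iff)
      hence "R \<in> PA" "Q \<in> PB" using inPA inPB True ab xy RQ by auto
      moreover have "R \<notin> PB" using \<open>R \<in> PA\<close> UA UB AB xy True ab by blast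
      moreover have "Q \<notin> PA" using \<open>Q \<in> PB\<close> UA UB AB xy \<open>y = b\<close> ab by blast
      ultimately show ?thesis unfolding tag_def H_edges_def using e xy by auto
    next
      case False
      hence "x = b" "y = a" using ab by (metis doubleton_eq_iff)+
      hence "R \<in> PB" "Q \<in> PA" using inPA inPB ab xy RQ by auto
      moreover have "R \<notin> PA" using \<open>R \<in> PB\<close> UA UB AB xy \<open>x = b\<close> ab by blast
      moreover have "{y,x} \<in> E" using e by (simp add: insert_commute)
      ultimately have "{Inl Q, Inr R} \<in> H_edges E PA PB" "tag R = Inr R" "tag Q = Inl Q"
        unfolding H_edges_def tag_def using xy by (blast, simp_all)
      thus ?thesis by (simp add: insert_commute)
    qed
  qed

  have dg: "\<And>V' E''. V' \<subseteq> H_vertices PA PB \<Longrightarrow> V' \<noteq> {} \<Longrightarrow> E'' \<subseteq> H_edges E PA PB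
      \<Longrightarrow> \<forall>e\<in>E''. e \<subseteq> V' \<Longrightarrow> \<exists>v\<in>V'. degree E'' v \<le> k"
    using assms(10) unfolding degenerate_def by blast
  have light: "\<forall>S. S \<subseteq> P \<and> card S = n \<longrightarrow> card {e\<in>L. e \<subseteq> \<Union>S} \<le> k * d * (\<Sum>R\<in>S. card R)" for n
  proof (induction n rule: less_induct)
    case (less n)
    show ?case
    proof (intro allI impI)
      fix S assume S: "S \<subseteq> P \<and> card S = n"
      have fS: "finite S" using S fP finite_subset by metis
      show "card {e\<in>L. e \<subseteq> \<Union>S} \<le> k * d * (\<Sum>R\<in>S. card R)"
      proof (cases "S = {}")
        case True
        have "{e\<in>L. e \<subseteq> \<Union>S} = {}"
        proof (rule ccontr)
          assume "{e\<in>L. e \<subseteq> \<Union>S} \<noteq> {}"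
          then obtain e where "e \<in> E" "e \<subseteq> {}" using True L_def by auto
          thus False using c2 by fastforce
        qed
        thus ?thesis by (metis card.empty zero_le)
      next
        case False
        define E' where "E' = {h \<in> H_edges E PA PB. h \<subseteq> tag ` S}"
        have "tag ` S \<subseteq> H_vertices PA PB" using S tagH by blast
        moreover have "tag ` S \<noteq> {}" using False by simp
        moreover have "E' \<subseteq> H_edges E PA PB" "\<forall>e\<in>E'. e \<subseteq> tag ` S" unfolding E'_def by auto
        ultimately obtain v where v: "v \<in> tag ` S" "degree E' v \<le> k"
          using dg by meson
        then obtain R where R: "R \<in> S" "v = tag R" by blast
        have RP: "R \<in> P" using R S by blast
        define NB where "NB = {Q\<in>S. {tag R, tag Q} \<in> E'}"
        have fE': "finite E'"
        proof -
          have "E' \<subseteq> Pow (tag ` S)" unfolding E'_def by auto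
          thus ?thesis using fS finite_subset by blast
        qed
        have "card NB \<le> card {h\<in>E'. tag R \<in> h}"
        proof -
          have "inj_on (\<lambda>Q. {tag R, tag Q}) NB"
            by (rule inj_onI) (metis doubleton_eq_iff tag_inj)
          moreover have "(\<lambda>Q. {tag R, tag Q}) ` NB \<subseteq> {h\<in>E'. tag R \<in> h}" unfolding NB_def by auto
          ultimately show ?thesis using fE' by (metis (no_types, lifting) card_inj_on_le finite_subset mem_Collect_eq subsetI)
        qed
        hence cNB: "card NB \<le> k" using v R unfolding degree_def by simp
        have fNB: "finite NB" using fS NB_def by simp
        have sub: "{e\<in>L. e \<subseteq> \<Union>S} \<subseteq> {e\<in>L. e \<subseteq> \<Union>(S - {R})} \<union> (\<Union>Q\<in>NB. {e\<in>L. \<exists>x\<in>R. \<exists>y\<in>Q. e={x,y}})"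
        proof
          fix e assume e: "e \<in> {e\<in>L. e \<subseteq> \<Union>S}"
          hence eE: "e \<in> E" "e \<in> L" "e \<subseteq> \<Union>S" using L_def by auto
          show "e \<in> {e\<in>L. e \<subseteq> \<Union>(S - {R})} \<union> (\<Union>Q\<in>NB. {e\<in>L. \<exists>x\<in>R. \<exists>y\<in>Q. e={x,y}})"
          proof (cases "e \<inter> R = {}")
            case True
            hence "e \<subseteq> \<Union>(S - {R})" using eE by blast
            thus ?thesis using eE by blast
          next
            case False
            then obtain x where x: "x \<in> e" "x \<in> R" by blast
            obtain a b where ab: "e = {a,b}" using eAB[OF eE(1)] by blast
            obtain y where exy: "e = {x,y}" using ab x by blast
            have "y \<in> \<Union>S" using exy eE by blast
            then obtain Q where Q: "Q \<in> S" "y \<in> Q" by blast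
            have QP: "Q \<in> P" using Q S by blast
            have "{tag R, tag Q} \<in> H_edges E PA PB" using Hedge eE exy x Q RP QP by metis
            moreover have "{tag R, tag Q} \<subseteq> tag ` S" using R Q by auto
            ultimately have "Q \<in> NB" unfolding NB_def E'_def using Q by blast
            thus ?thesis using eE exy x Q by blast
          qed
        qed
        have fL: "finite L" using fV eV L_def by (metis Diff_subset finite_Pow_iff finite_subset subsetI PowI)
        have "card {e\<in>L. e \<subseteq> \<Union>S} \<le> card {e\<in>L. e \<subseteq> \<Union>(S - {R})} + card (\<Union>Q\<in>NB. {e\<in>L. \<exists>x\<in>R. \<exists>y\<in>Q. e={x,y}})"
        proof -
          have fin: "finite ({e\<in>L. e \<subseteq> \<Union>(S - {R})} \<union> (\<Union>Q\<in>NB. {e\<in>L. \<exists>x\<in>R. \<exists>y\<in>Q. e={x,y}}))"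
            by (rule finite_subset[OF _ fL]) auto
          show ?thesis by (rule le_trans[OF card_mono[OF fin sub] card_Un_le])
        qed
        also have "card (\<Union>Q\<in>NB. {e\<in>L. \<exists>x\<in>R. \<exists>y\<in>Q. e={x,y}}) \<le> (\<Sum>Q\<in>NB. card {e\<in>L. \<exists>x\<in>R. \<exists>y\<in>Q. e={x,y}})"
          by (rule card_UN_le[OF fNB])
        also have "\<dots> \<le> (\<Sum>Q\<in>NB. d * card R)"
          using lightQ RP S NB_def by (intro sum_mono) blast
        also have "\<dots> = card NB * (d * card R)" by simp
        also have "\<dots> \<le> k * (d * card R)" using cNB by (intro mult_le_mono1)
        also have "card {e\<in>L. e \<subseteq> \<Union>(S - {R})} \<le> k * d * (\<Sum>R\<in>S - {R}. card R)"
        proof -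
          have "card (S - {R}) < n" using S R fS by (metis card_Diff1_less)
          moreover have "S - {R} \<subseteq> P" using S by blast
          ultimately show ?thesis using less by blast
        qed
        finally show ?thesis using sum.remove[OF fS R(1), of card]
          by (simp add: algebra_simps)
      qed
    qed
  qed
  have LE: "L \<subseteq> {e\<in>L. e \<subseteq> \<Union>P}" using UP eV L_def by auto
  have fE: "finite E" using fV eV by (meson Pow_iff finite_Pow_iff finite_subset subsetI)
  have cL: "card L \<le> k * d * card V"
    using light[of "card P"] sumP LE fE L_def
    by (metis (no_types, lifting) order_refl subset_antisym mem_Collect_eq subsetI)
  have "E \<subseteq> L \<union> \<Union>(HE ` P)" unfolding L_def by blast
  hence "card E \<le> card L + card (\<Union>(HE ` P))"
  proof -
    have fin: "finite (L \<union> \<Union>(HE ` P))"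
      by (rule finite_subset[OF _ fE]) (auto simp: L_def HE_def)
    show ?thesis by (rule le_trans[OF card_mono[OF fin \<open>E \<subseteq> L \<union> \<Union>(HE ` P)\<close>] card_Un_le])
  qed
  also have "card (\<Union>(HE ` P)) \<le> (\<Sum>Q\<in>P. card (HE Q))" by (rule card_UN_le[OF fP])
  also have "\<dots> \<le> (\<Sum>Q\<in>P. d * card Q)" using heavy by (intro sum_mono) auto
  also have "\<dots> = d * card V" by (simp only: sum_distrib_left[symmetric] sumP)
  finally have cE: "card E \<le> k * d * card V + d * card V" using cL by simp
  show ?thesis
  proof (cases "card V = 0")
    case True thus ?thesis unfolding avg_degree_def by simp
  next
    case False
    hence pos: "real (card V) > 0" by simp
    define m where "m = d * card V"
    have km: "m \<le> k * m" using assms(1) by simp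
    have "card E \<le> k * m + m" using cE m_def by (simp add: mult.assoc)
    hence "2 * card E \<le> 13 * (k * m)" using km by linarith
    hence "real (2 * card E) \<le> real (13 * (k * m))" by (simp only: of_nat_le_iff)
    hence "2 * real (card E) \<le> 13 * real k * real d * real (card V)" unfolding m_def by simp
    thus ?thesis unfolding avg_degree_def using pos by (simp add: divide_le_eq)
  qed
qed

end
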